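(* In the setting below, $\sigma_0^{-1}(0)=(\sigma|_{\hat M_0})^{-1}(0)$, and the map $\sigma_0^{-1}(0)/H_0\to\sigma^{-1}(0)/H$ induced by the inclusion $\sigma_0^{-1}(0)\subset\sigma^{-1}(0)$ is injective.
   Context: $M=\mathrm{End}(\mathbb{C}^k)\oplus\mathrm{End}(\mathbb{C}^k)\oplus\mathbb{C}^k\oplus(\mathbb{C}^k)^*$ (flat hyperkähler), $H=U(k)\times U(k)$ acting by $(g_0,g_1)\cdot(A,B,p,q)=(g_0Ag_1^{-1},g_1Bg_0^{-1},g_0p,qg_0^{-1})$ with hyperkähler moment map $\hat\mu$, $G=U(k)$, $\rho=\mathrm{id}$. $N_G$ is Kronheimer's hyperkähler manifold: the moduli $\mathcal{N}_G/\mathcal{G}_0$ of solutions $T=(T_0,\dots,T_3)\in C^1([0,1],\mathbf{g})\otimes\mathbb{H}$ of Nahm's equations $\frac{dT_i}{ds}+[T_0,T_i]+[T_j,T_k]=0$ modulo gauge transformations equal to $1$ at both ends, with $G\times G$-action via endpoint values of gauge transformations and hyperkähler moment map $\nu([T])=((T_1(0),T_2(0),T_3(0)),-(T_1(1),T_2(1),T_3(1)))$; $\sigma(x,p)=\hat\mu(x)+\rho^*\nu(p)$ on $\hat M=M\times N_{U(k)}$. Let $T^k\subset U(k)$ be the diagonal torus, $\mathbf{t}^k$ its Lie algebra; $N_{T^k}$ is identified with $T^k\times\mathbb{R}^{3k}$ (flat), and the inclusion $T^k\subset U(k)$ induces a hyperkähler embedding $N_{T^k}\subset N_{U(k)}$.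 Let $M_0=\{(A,B,0,0):A,B\text{ diagonal}\}\cong\mathbb{C}^k\oplus\mathbb{C}^k$ and $\hat M_0=M_0\times N_{T^k}\subset\hat M$. Let $H_0\subset H$ be the closed subgroup generated by $\{(g\chi,\chi):g\in T^k,\ \chi\in\mathcal{S}_k\}$ ($\mathcal{S}_k$ realized as permutation matrices), so $H_0\cong\mathcal{S}_k\ltimes T^k$ preserves $\hat M_0$, with Lie algebra $\mathbf{h}_0=\mathbf{t}^k\oplus\{0\}$; $\iota_0^*:\mathbf{h}^*\to\mathbf{h}_0^*$ is the restriction and $\sigma_0=\iota_0^*\circ\sigma|_{\hat M_0}$. *)

theory Defs
  imports "HOL-Analysis.Analysis"
begin

type_synonym 'k cmat = "complex^'k^'k"

(* points of M = End(C^k) + End(C^k) + C^k + (C^k)^*  : (A, B, p, q);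
   p is a column vector, q a row vector *)
type_synonym 'k Mpt = "'k cmat \<times> 'k cmat \<times> (complex^'k) \<times> (complex^'k)"

(* Nahm data T = (T_0,..,T_3): index i in {0,1,2,3}, parameter s in [0,1] *)
type_synonym 'k nahm = "nat \<Rightarrow> real \<Rightarrow> 'k cmat"

definition adj :: "'k::finite cmat \<Rightarrow> 'k cmat" where
  "adj A = (\<chi> i j. cnj (A $ j $ i))"

definition unitary :: "'k::finite cmat \<Rightarrow> bool" where
  "unitary U \<longleftrightarrow> adj U ** U = mat 1 \<and> U ** adj U = mat 1"

definition skew :: "'k::finite cmat \<Rightarrow> bool" where
  "skew X \<longleftrightarrow> adj X = - X"

definition diagonal :: "'k::finite cmat \<Rightarrow> bool" where
  "diagonal X \<longleftrightarrow> (\<forall>i j. i \<noteq> j \<longrightarrow> X $ i $ j = 0)"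

definition permmat :: "'k::finite cmat \<Rightarrow> bool" where
  "permmat P \<longleftrightarrow> (\<exists>\<pi>. \<pi> permutes (UNIV :: 'k set) \<and> P = (\<chi> i j. if i = \<pi> j then 1 else 0))"

definition comm :: "'k::finite cmat \<Rightarrow> 'k cmat \<Rightarrow> 'k cmat" where
  "comm X Y = X ** Y - Y ** X"

definition C1_on01 :: "(real \<Rightarrow> 'a::real_normed_vector) \<Rightarrow> bool" where
  "C1_on01 f \<longleftrightarrow> (\<exists>f'. (\<forall>s\<in>{0..1}. (f has_vector_derivative f' s) (at s within {0..1}))
                      \<and> continuous_on {0..1} f')"

definition C2_on01 :: "(real \<Rightarrow> 'a::real_normed_vector) \<Rightarrow> bool" where
  "C2_on01 f \<longleftrightarrow> (\<exists>f'. (\<forall>s\<in>{0..1}. (f has_vector_derivative f' s) (at s within {0..1}))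
                      \<and> C1_on01 f')"

definition nahm_sol :: "'k::finite nahm \<Rightarrow> bool" where
  "nahm_sol T \<longleftrightarrow>
     (\<forall>i\<le>3. C1_on01 (T i) \<and> (\<forall>s\<in>{0..1}. skew (T i s))) \<and>
     (\<forall>(i,j,l)\<in>{(1,2,3),(2,3,1),(3,1,2)}. \<forall>s\<in>{0..1}.
        (T i has_vector_derivative (- comm (T 0 s) (T i s) - comm (T j s) (T l s)))
          (at s within {0..1}))"

definition gauge :: "(real \<Rightarrow> 'k::finite cmat) \<Rightarrow> bool" where
  "gauge g \<longleftrightarrow> C2_on01 g \<and> (\<forall>s\<in>{0..1}. unitary (g s))"

definition gact :: "(real \<Rightarrow> 'k::finite cmat) \<Rightarrow> 'k nahm \<Rightarrow> 'k nahm" where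
  "gact g T i s =
     (if i = 0 then g s ** T 0 s ** adj (g s) - vector_derivative g (at s within {0..1}) ** adj (g s)
      else g s ** T i s ** adj (g s))"

definition nahm_eq :: "'k::finite nahm \<Rightarrow> 'k nahm \<Rightarrow> bool" where
  "nahm_eq S T \<longleftrightarrow> (\<forall>i\<le>3. \<forall>s\<in>{0..1}. S i s = T i s)"

definition Hgrp :: "('k::finite cmat \<times> 'k cmat) set" where
  "Hgrp = {(g0, g1). unitary g0 \<and> unitary g1}"

fun Hact :: "'k::finite cmat \<times> 'k cmat \<Rightarrow> 'k Mpt \<Rightarrow> 'k Mpt" where
  "Hact (g0, g1) (A, B, p, q) =
      ((g0 ** A) ** adj g1, (g1 ** B) ** adj g0, g0 *v p, vector_matrix_mult q (adj g0))"

definition closed_subgroup_H :: "('k::finite cmat \<times> 'k cmat) set \<Rightarrow> bool" where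
  "closed_subgroup_H S \<longleftrightarrow> S \<subseteq> Hgrp \<and> (mat 1, mat 1) \<in> S \<and>
     (\<forall>a\<in>S. \<forall>b\<in>S. (fst a ** fst b, snd a ** snd b) \<in> S) \<and>
     (\<forall>a\<in>S. (adj (fst a), adj (snd a)) \<in> S) \<and> closed S"

definition H0gens :: "('k::finite cmat \<times> 'k cmat) set" where
  "H0gens = {(g ** c, c) | g c. diagonal g \<and> unitary g \<and> permmat c}"

definition H0grp :: "('k::finite cmat \<times> 'k cmat) set" where
  "H0grp = \<Inter> {S. closed_subgroup_H S \<and> H0gens \<subseteq> S}"

(* points of hat M = M x N_{U(k)}: pairs (x, T) with T a Nahm solution, [T] its G_0-class.
   (x,T) is related to (y,S) by h in a subgroup K iff there is a gauge transformation g
   with (g 0, g 1) = h in K,  y = h.x  and  S = g.T.  For K = {1} this is G_0-equivalence. *)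
definition rel_by :: "('k::finite cmat \<times> 'k cmat) set \<Rightarrow> 'k Mpt \<times> 'k nahm \<Rightarrow> 'k Mpt \<times> 'k nahm \<Rightarrow> bool" where
  "rel_by K z w \<longleftrightarrow> (case z of (x, T) \<Rightarrow> case w of (y, S) \<Rightarrow>
     (\<exists>g. gauge g \<and> (g 0, g 1) \<in> K \<and> y = Hact (g 0, g 1) x \<and> nahm_eq S (gact g T)))"

(* hat M_0 = M_0 x N_{T^k}, N_{T^k} embedded in N_{U(k)} as classes of t^k-valued solutions *)
definition in_hatM0 :: "'k::finite Mpt \<times> 'k nahm \<Rightarrow> bool" where
  "in_hatM0 z \<longleftrightarrow> (case z of (x, T) \<Rightarrow>
     nahm_sol T \<and>
     (\<exists>A B. x = (A, B, 0, 0) \<and> diagonal A \<and> diagonal B) \<and>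
     (\<exists>S. nahm_sol S \<and> (\<forall>i\<le>3. \<forall>s\<in>{0..1}. diagonal (S i s)) \<and>
          rel_by {(mat 1, mat 1)} (x, T) (x, S)))"

(* hyperkaehler moment map of H on M, components a = 1,2,3 (I,J,K), factor j = 0,1,
   values in u(k) (h^* identified with h via the trace form) *)
definition outer :: "complex^'k \<Rightarrow> complex^'k \<Rightarrow> 'k::finite cmat" where
  "outer u v = (\<chi> i j. u $ i * v $ j)"

definition csmul :: "complex \<Rightarrow> 'k::finite cmat \<Rightarrow> 'k cmat" where
  "csmul c M = (\<chi> a b. c * M $ a $ b)"

definition muR :: "'k::finite Mpt \<Rightarrow> nat \<Rightarrow> 'k cmat" where
  "muR x j = (case x of (A, B, p, q) \<Rightarrow>
     if j = 0 then csmul (\<i> / 2) (A ** adj A - adj B ** B + outer p (\<chi> i. cnj (p $ i))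
                                   - outer (\<chi> i. cnj (q $ i)) q)
     else csmul (\<i> / 2) (B ** adj B - adj A ** A))"

definition muC :: "'k::finite Mpt \<Rightarrow> nat \<Rightarrow> 'k cmat" where
  "muC x j = (case x of (A, B, p, q) \<Rightarrow>
     if j = 0 then A ** B + outer p q else - (B ** A))"

(* hyperkaehler moment map: mu_1 = muR, mu_2 + i mu_3 = muC with mu_2, mu_3 in u(k) *)
definition mu_hat :: "'k::finite Mpt \<Rightarrow> nat \<Rightarrow> nat \<Rightarrow> 'k cmat" where
  "mu_hat x a j =
     (if a = 1 then muR x j
      else if a = 2 then csmul (1/2) (muC x j - adj (muC x j))
      else csmul (1 / (2 * \<i>)) (muC x j + adj (muC x j)))"

definition nu :: "'k::finite nahm \<Rightarrow> nat \<Rightarrow> nat \<Rightarrow> 'k cmat" where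
  "nu T a j = (if j = 0 then T a 0 else - T a 1)"

(* sigma(x,[T]) = mu_hat(x) + nu([T])   (rho = id) *)
definition sigma :: "'k::finite Mpt \<times> 'k nahm \<Rightarrow> nat \<Rightarrow> nat \<Rightarrow> 'k cmat" where
  "sigma z a j = (case z of (x, T) \<Rightarrow> mu_hat x a j + nu T a j)"

definition sigma_zero :: "'k::finite Mpt \<times> 'k nahm \<Rightarrow> bool" where
  "sigma_zero z \<longleftrightarrow> (\<forall>a\<in>{1,2,3}. \<forall>j\<in>{0,1}. sigma z a j = 0)"

(* sigma_0 = iota_0^* o sigma: pairing of sigma with h_0 = t^k + 0 via the trace form *)
definition sigma0_zero :: "'k::finite Mpt \<times> 'k nahm \<Rightarrow> bool" where
  "sigma0_zero z \<longleftrightarrow> (\<forall>a\<in>{1,2,3}. \<forall>X. diagonal X \<and> skew X \<longrightarrow>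
       Re (trace (sigma z a 0 ** X)) = 0)"

end

theory Submission
  imports Defs
begin


lemma mm_entry: "(A ** B) $ i $ j = (\<Sum>k\<in>UNIV. A $ i $ k * B $ k $ j)"
  by (simp add: matrix_matrix_mult_def)

lemma adj_entry[simp]: "adj A $ i $ j = cnj (A $ j $ i)"
  by (simp add: adj_def)

lemma adj_adj[simp]: "adj (adj A) = A"
  by (simp add: vec_eq_iff)

lemma adj_mult: "adj (A ** B) = adj B ** adj A"
  by (simp add: vec_eq_iff mm_entry mult.commute)

lemma adj_mat1[simp]: "adj (mat 1 :: 'k::finite cmat) = mat 1"
  by (simp add: vec_eq_iff mat_def)

lemma adj_add: "adj (A + B) = adj A + adj B"
  by (simp add: vec_eq_iff)
lemma adj_diff: "adj (A - B) = adj A - adj B"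
  by (simp add: vec_eq_iff)
lemma adj_minus: "adj (- A) = - adj A"
  by (simp add: vec_eq_iff)
lemma adj_scaleR: "adj (c *\<^sub>R A) = c *\<^sub>R adj A"
  by (simp add: vec_eq_iff)
lemma adj_zero[simp]: "adj 0 = 0"
  by (simp add: vec_eq_iff)

lemma linear_adj: "linear (adj :: 'k::finite cmat \<Rightarrow> 'k cmat)"
  by (rule linearI) (simp_all add: adj_add adj_scaleR)

lemma bounded_linear_adj: "bounded_linear (adj :: 'k::finite cmat \<Rightarrow> 'k cmat)"
  using linear_adj linear_conv_bounded_linear by blast

lemma matrix_add_rdistrib': "((B + C) ** A) = (B ** A) + (C ** A)"
  by (vector matrix_matrix_mult_def sum.distrib[symmetric] field_simps)

lemma bilinear_mm: "bilinear ((**) :: 'k::finite cmat \<Rightarrow> 'k cmat \<Rightarrow> 'k cmat)"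
  unfolding bilinear_def
  by (auto intro!: linearI simp: matrix_add_ldistrib matrix_add_rdistrib' scalar_matrix_assoc
      matrix_scalar_ac)

lemma bounded_bilinear_mm: "bounded_bilinear ((**) :: 'k::finite cmat \<Rightarrow> 'k cmat \<Rightarrow> 'k cmat)"
  using bilinear_mm bilinear_conv_bounded_bilinear by blast

lemma unitary_mult: "unitary A \<Longrightarrow> unitary B \<Longrightarrow> unitary (A ** B)"
  unfolding unitary_def adj_mult
  by (metis matrix_mul_assoc matrix_mul_lid)

lemma unitary_adj: "unitary A \<Longrightarrow> unitary (adj A)"
  unfolding unitary_def by simp

lemma unitary_mat1[simp]: "unitary (mat 1 :: 'k::finite cmat)"
  unfolding unitary_def by simp

lemma diag_mult_left: "diagonal D \<Longrightarrow> (D ** E) $ i $ j = D $ i $ i * E $ i $ j"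
  unfolding diagonal_def mm_entry
  by (subst sum.remove[of _ i]) (auto intro!: sum.neutral)

lemma diag_mult_right: "diagonal D \<Longrightarrow> (E ** D) $ i $ j = E $ i $ j * D $ j $ j"
  unfolding diagonal_def mm_entry
  by (subst sum.remove[of _ j]) (auto intro!: sum.neutral)



lemma vec_deriv_iff:
  fixes f :: "real \<Rightarrow> 'a::real_normed_vector ^ 'n::finite"
  shows "(f has_vector_derivative D) (at x within S) \<longleftrightarrow>
         (\<forall>i. ((\<lambda>s. f s $ i) has_vector_derivative D $ i) (at x within S))"
proof
  assume "(f has_vector_derivative D) (at x within S)"
  then show "\<forall>i. ((\<lambda>s. f s $ i) has_vector_derivative D $ i) (at x within S)"
    using bounded_linear.has_vector_derivative[OF bounded_linear_vec_nth] by blast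
next
  assume H: "\<forall>i. ((\<lambda>s. f s $ i) has_vector_derivative D $ i) (at x within S)"
  show "(f has_vector_derivative D) (at x within S)"
    unfolding has_vector_derivative_def has_derivative_within
  proof (intro conjI)
    show "bounded_linear (\<lambda>h. h *\<^sub>R D)" by (rule bounded_linear_scaleR_left)
    show "((\<lambda>y. (1 / norm (y - x)) *\<^sub>R (f y - (f x + (y - x) *\<^sub>R D))) \<longlongrightarrow> 0) (at x within S)"
    proof (rule vec_tendstoI)
      fix i
      from H have "((\<lambda>s. f s $ i) has_derivative (\<lambda>h. h *\<^sub>R D $ i)) (at x within S)"
        by (simp add: has_vector_derivative_def)
      then have "((\<lambda>y. (1 / norm (y - x)) *\<^sub>R (f y $ i - (f x $ i + (y - x) *\<^sub>R D $ i))) \<longlongrightarrow> 0) (at x within S)"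
        unfolding has_derivative_within by blast
      then show "((\<lambda>y. ((1 / norm (y - x)) *\<^sub>R (f y - (f x + (y - x) *\<^sub>R D))) $ i) \<longlongrightarrow> 0 $ i) (at x within S)"
        by simp
    qed
  qed
qed

lemma mat_deriv_iff:
  fixes f :: "real \<Rightarrow> 'a::real_normed_vector ^ 'n::finite ^ 'm::finite"
  shows "(f has_vector_derivative D) (at x within S) \<longleftrightarrow>
         (\<forall>i j. ((\<lambda>s. f s $ i $ j) has_vector_derivative D $ i $ j) (at x within S))"
  by (simp add: vec_deriv_iff[of f] vec_deriv_iff[of "\<lambda>s. f s $ _"])

lemma vd01:
  fixes f :: "real \<Rightarrow> 'k::finite cmat"
  assumes "s \<in> {0..1}" "(f has_vector_derivative D) (at s within {0..1})"
  shows "vector_derivative f (at s within {0..1}) = D"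
  using vector_derivative_within_closed_interval[of 0 1 s f D] assms by simp

lemma mm_deriv:
  fixes f g :: "real \<Rightarrow> 'k::finite cmat"
  assumes "(f has_vector_derivative f') (at s within S)" "(g has_vector_derivative g') (at s within S)"
  shows "((\<lambda>s. f s ** g s) has_vector_derivative (f s ** g' + f' ** g s)) (at s within S)"
  using bounded_bilinear.has_vector_derivative[OF bounded_bilinear_mm assms] .

lemma adj_deriv:
  fixes f :: "real \<Rightarrow> 'k::finite cmat"
  assumes "(f has_vector_derivative f') (at s within S)"
  shows "((\<lambda>s. adj (f s)) has_vector_derivative adj f') (at s within S)"
  using bounded_linear.has_vector_derivative[OF bounded_linear_adj assms] .



lemma C1_cont: "C1_on01 f \<Longrightarrow> continuous_on {0..1} f"
  unfolding C1_on01_def by (auto intro: continuous_on_vector_derivative)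

lemma C1_const: "C1_on01 (\<lambda>s. c)"
  unfolding C1_on01_def by (rule exI[of _ "\<lambda>s. 0"]) auto

lemma C1_add:
  assumes "C1_on01 f" "C1_on01 g" shows "C1_on01 (\<lambda>s. f s + g s)"
proof -
  from assms obtain f' g' where f: "\<forall>s\<in>{0..1}. (f has_vector_derivative f' s) (at s within {0..1})"
    "continuous_on {0..1} f'" and g: "\<forall>s\<in>{0..1}. (g has_vector_derivative g' s) (at s within {0..1})"
    "continuous_on {0..1} g'" unfolding C1_on01_def by blast
  show ?thesis unfolding C1_on01_def
    apply (rule exI[of _ "\<lambda>s. f' s + g' s"])
    using f g by (simp add: has_vector_derivative_add continuous_on_add)
qed

lemma C1_diff:
  assumes "C1_on01 f" "C1_on01 g" shows "C1_on01 (\<lambda>s. f s - g s)"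
proof -
  from assms obtain f' g' where f: "\<forall>s\<in>{0..1}. (f has_vector_derivative f' s) (at s within {0..1})"
    "continuous_on {0..1} f'" and g: "\<forall>s\<in>{0..1}. (g has_vector_derivative g' s) (at s within {0..1})"
    "continuous_on {0..1} g'" unfolding C1_on01_def by blast
  show ?thesis unfolding C1_on01_def
    apply (rule exI[of _ "\<lambda>s. f' s - g' s"])
    using f g by (simp add: has_vector_derivative_diff continuous_on_diff)
qed

lemma C1_mm:
  fixes f g :: "real \<Rightarrow> 'k::finite cmat"
  assumes "C1_on01 f" "C1_on01 g"
  shows "C1_on01 (\<lambda>s. f s ** g s)"
proof -
  from assms obtain f' g' where f: "\<forall>s\<in>{0..1}. (f has_vector_derivative f' s) (at s within {0..1})"
    "continuous_on {0..1} f'" and g: "\<forall>s\<in>{0..1}. (g has_vector_derivative g' s) (at s within {0..1})"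
    "continuous_on {0..1} g'" unfolding C1_on01_def by blast
  have cf: "continuous_on {0..1} f" and cg: "continuous_on {0..1} g"
    using assms C1_cont by blast+
  have c: "continuous_on {0..1} (\<lambda>s. f s ** g' s + f' s ** g s)"
    by (intro continuous_on_add bounded_bilinear.continuous_on[OF bounded_bilinear_mm] cf cg f g)
  show ?thesis unfolding C1_on01_def
    apply (rule exI[of _ "\<lambda>s. f s ** g' s + f' s ** g s"])
    using f g mm_deriv c by blast
qed



lemma C1_adj:
  fixes f :: "real \<Rightarrow> 'k::finite cmat"
  assumes "C1_on01 f" shows "C1_on01 (\<lambda>s. adj (f s))"
proof -
  from assms obtain f' where f: "\<forall>s\<in>{0..1}. (f has_vector_derivative f' s) (at s within {0..1})"
    "continuous_on {0..1} f'" unfolding C1_on01_def by blast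
  have c: "continuous_on {0..1} (\<lambda>s. adj (f' s))"
    by (rule bounded_linear.continuous_on[OF bounded_linear_adj f(2)])
  show ?thesis unfolding C1_on01_def
    apply (rule exI[of _ "\<lambda>s. adj (f' s)"])
    using f adj_deriv c by blast
qed

lemma C2_C1: assumes "C2_on01 f" shows "C1_on01 f"
proof -
  from assms obtain f' where f: "\<forall>s\<in>{0..1}. (f has_vector_derivative f' s) (at s within {0..1})"
    "C1_on01 f'" unfolding C2_on01_def by blast
  have "continuous_on {0..1} f'" using f(2) by (rule C1_cont)
  then show ?thesis unfolding C1_on01_def using f(1) by blast
qed

lemma C2_mm:
  fixes f g :: "real \<Rightarrow> 'k::finite cmat"
  assumes "C2_on01 f" "C2_on01 g"
  shows "C2_on01 (\<lambda>s. f s ** g s)"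
proof -
  from assms obtain f' g' where f: "\<forall>s\<in>{0..1}. (f has_vector_derivative f' s) (at s within {0..1})"
    "C1_on01 f'" and g: "\<forall>s\<in>{0..1}. (g has_vector_derivative g' s) (at s within {0..1})"
    "C1_on01 g'" unfolding C2_on01_def by blast
  have "C1_on01 f" "C1_on01 g" using assms C2_C1 by blast+
  have c: "C1_on01 (\<lambda>s. f s ** g' s + f' s ** g s)"
    by (intro C1_add C1_mm \<open>C1_on01 f\<close> \<open>C1_on01 g\<close> f g)
  show ?thesis unfolding C2_on01_def
    apply (rule exI[of _ "\<lambda>s. f s ** g' s + f' s ** g s"])
    using f g mm_deriv c by blast
qed

lemma C2_adj:
  fixes f :: "real \<Rightarrow> 'k::finite cmat"
  assumes "C2_on01 f" shows "C2_on01 (\<lambda>s. adj (f s))"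
proof -
  from assms obtain f' where f: "\<forall>s\<in>{0..1}. (f has_vector_derivative f' s) (at s within {0..1})"
    "C1_on01 f'" unfolding C2_on01_def by blast
  have c: "C1_on01 (\<lambda>s. adj (f' s))" by (rule C1_adj[OF f(2)])
  show ?thesis unfolding C2_on01_def
    apply (rule exI[of _ "\<lambda>s. adj (f' s)"])
    using f adj_deriv c by blast
qed

lemma C1_entry:
  fixes f :: "real \<Rightarrow> 'k::finite cmat"
  assumes "C1_on01 f" shows "C1_on01 (\<lambda>s. f s $ i $ j)"
proof -
  from assms obtain f' where f: "\<forall>s\<in>{0..1}. (f has_vector_derivative f' s) (at s within {0..1})"
    "continuous_on {0..1} f'" unfolding C1_on01_def by blast
  have c: "continuous_on {0..1} (\<lambda>s. f' s $ i $ j)"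
    by (rule bounded_linear.continuous_on[OF bounded_linear_vec_nth
           bounded_linear.continuous_on[OF bounded_linear_vec_nth f(2)]])
  show ?thesis unfolding C1_on01_def
    apply (rule exI[of _ "\<lambda>s. f' s $ i $ j"])
    using f(1) c by (simp add: mat_deriv_iff)
qed

lemma gauge_mm: "gauge f \<Longrightarrow> gauge g \<Longrightarrow> gauge (\<lambda>s. f s ** g s)"
  unfolding gauge_def using C2_mm unitary_mult by blast

lemma gauge_adj: "gauge f \<Longrightarrow> gauge (\<lambda>s. adj (f s))"
  unfolding gauge_def using C2_adj unitary_adj by blast

lemma gauge_deriv: "gauge g \<Longrightarrow> s \<in> {0..1} \<Longrightarrow>
   (g has_vector_derivative vector_derivative g (at s within {0..1})) (at s within {0..1})"
proof -
  assume "gauge g" "s \<in> {0..1}"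
  then obtain f' where "\<forall>s\<in>{0..1}. (g has_vector_derivative f' s) (at s within {0..1})"
    unfolding gauge_def C2_on01_def by blast
  then have "(g has_vector_derivative f' s) (at s within {0..1})" using \<open>s \<in> {0..1}\<close> by blast
  moreover have "vector_derivative g (at s within {0..1}) = f' s"
    using vd01[OF \<open>s \<in> {0..1}\<close> calculation] .
  ultimately show ?thesis by simp
qed



lemma mm_diff_l: "(A::'k::finite cmat) ** (B - C) = A ** B - A ** C"
  by (simp add: vec_eq_iff mm_entry sum_subtractf right_diff_distrib)
lemma mm_diff_r: "((B::'k::finite cmat) - C) ** A = B ** A - C ** A"
  by (simp add: vec_eq_iff mm_entry sum_subtractf left_diff_distrib)
lemma mm_neg_l: "(- (A::'k::finite cmat)) ** B = - (A ** B)"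
  by (simp add: vec_eq_iff mm_entry sum_negf)
lemma mm_neg_r: "(A::'k::finite cmat) ** (- B) = - (A ** B)"
  by (simp add: vec_eq_iff mm_entry sum_negf)

lemma unit_cancel_r: "unitary q \<Longrightarrow> (x ** q) ** adj q = (x::'k::finite cmat)"
  unfolding unitary_def by (metis matrix_mul_assoc matrix_mul_rid)
lemma unit_cancel_r': "unitary q \<Longrightarrow> (x ** adj q) ** q = (x::'k::finite cmat)"
  unfolding unitary_def by (metis matrix_mul_assoc matrix_mul_rid)

lemma gact_cong: "X i s = Y i s \<Longrightarrow> gact g X i s = gact g Y i s"
  by (cases "i = 0") (simp_all add: gact_def)

lemma gact_id:
  assumes "s \<in> {0..1}" shows "gact (\<lambda>s. mat 1) X i s = X i s"
proof -
  have "vector_derivative (\<lambda>s. mat 1 :: 'a::finite cmat) (at s within {0..1}) = 0"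
    by (rule vd01[OF assms]) simp
  then show ?thesis by (simp add: gact_def)
qed

lemma gact_comp:
  fixes p q :: "real \<Rightarrow> 'k::finite cmat"
  assumes s: "s \<in> {0..1}"
    and p: "(p has_vector_derivative p') (at s within {0..1})"
    and q: "(q has_vector_derivative q') (at s within {0..1})"
    and uq: "unitary (q s)"
  shows "gact (\<lambda>s. p s ** q s) X i s = gact p (gact q X) i s"
proof -
  have dp: "vector_derivative p (at s within {0..1}) = p'" by (rule vd01[OF s p])
  have dq: "vector_derivative q (at s within {0..1}) = q'" by (rule vd01[OF s q])
  have dpq: "vector_derivative (\<lambda>s. p s ** q s) (at s within {0..1}) = p s ** q' + p' ** q s"
    by (rule vd01[OF s mm_deriv[OF p q]])
  show ?thesis
    using uq
    by (simp add: gact_def dp dq dpq adj_mult matrix_mul_assoc matrix_add_rdistrib' mm_diff_l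
        mm_diff_r unit_cancel_r algebra_simps)
qed



lemma diag0: "diagonal D \<Longrightarrow> i \<noteq> j \<Longrightarrow> D $ i $ j = 0"
  unfolding diagonal_def by blast

lemma diag_comm: "diagonal D \<Longrightarrow> diagonal E \<Longrightarrow> D ** E = E ** D"
  by (simp add: vec_eq_iff diag_mult_left diag_mult_right) (metis diag0 mult.commute mult_zero_left mult_zero_right)

lemma triple_ex: "a \<in> {1,2,3::nat} \<Longrightarrow> \<exists>j l. (a, j, l) \<in> {(1::nat,2::nat,3::nat),(2,3,1),(3,1,2)}"
  by auto

lemma diag_nahm_const:
  fixes S :: "'k::finite nahm"
  assumes ns: "nahm_sol S" and dg: "\<forall>i\<le>3. \<forall>s\<in>{0..1}. diagonal (S i s)"
    and a: "a \<in> {1,2,3}" and s: "s \<in> {0..1}"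
  shows "S a s = S a 0"
proof -
  obtain j l where jl: "(a, j, l) \<in> {(1::nat,2::nat,3::nat),(2,3,1),(3,1,2)}" using triple_ex[OF a] by blast
  have le: "j \<le> 3" "l \<le> 3" "a \<le> 3" using jl by auto
  have "\<forall>t\<in>{0..1}. (S a has_vector_derivative (- comm (S 0 t) (S a t) - comm (S j t) (S l t)))
          (at t within {0..1})"
    using ns jl unfolding nahm_sol_def by blast
  moreover have "\<forall>t\<in>{0..1}. - comm (S 0 t) (S a t) - comm (S j t) (S l t) = 0"
    using dg le by (simp add: comm_def diag_comm)
  ultimately have "\<forall>t\<in>{0..1}. (S a has_vector_derivative 0) (at t within {0..1})" by simp
  then obtain c where "\<And>t. t \<in> {0..1} \<Longrightarrow> S a t = c"
    using has_vector_derivative_zero_constant[of "{0..1::real}" "S a"] by blast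
  then show ?thesis using s by simp
qed

lemma hatM0_data:
  assumes "in_hatM0 (x, T)"
  shows "\<exists>A B Sd l. x = (A, B, 0, 0) \<and> diagonal A \<and> diagonal B \<and> nahm_sol Sd \<and>
     (\<forall>i\<le>3. \<forall>s\<in>{0..1}. diagonal (Sd i s)) \<and> gauge l \<and> l 0 = mat 1 \<and> l 1 = mat 1 \<and>
     nahm_eq Sd (gact l T) \<and> nahm_sol T"
  using assms unfolding in_hatM0_def rel_by_def by auto

lemma gact_end_nz:
  assumes "g 0 = mat 1" "i \<noteq> 0" shows "gact g T i 0 = T i 0"
  using assms by (simp add: gact_def)
lemma gact_end_nz1:
  assumes "g 1 = mat 1" "i \<noteq> 0" shows "gact g T i 1 = T i 1"
  using assms by (simp add: gact_def)

lemma hatM0_T: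
  assumes "in_hatM0 (x, T)"
  shows "\<exists>A B. x = (A, B, 0, 0) \<and> diagonal A \<and> diagonal B \<and>
     (\<forall>a\<in>{1,2,3}. diagonal (T a 0) \<and> skew (T a 0) \<and> T a 1 = T a 0)"
proof -
  obtain A B Sd l where H: "x = (A, B, 0, 0)" "diagonal A" "diagonal B" "nahm_sol Sd"
     "\<forall>i\<le>3. \<forall>s\<in>{0..1}. diagonal (Sd i s)" "gauge l" "l 0 = mat 1" "l 1 = mat 1"
     "nahm_eq Sd (gact l T)" "nahm_sol T"
    using hatM0_data[OF assms] by blast
  have "diagonal (T a 0) \<and> skew (T a 0) \<and> T a 1 = T a 0" if a: "a \<in> {1,2,3}" for a
  proof -
    have le: "a \<le> 3" "a \<noteq> 0" using a by auto
    have eq: "\<And>i s. i \<le> 3 \<Longrightarrow> s \<in> {0..1} \<Longrightarrow> Sd i s = gact l T i s"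
      using H(9) unfolding nahm_eq_def by blast
    have e0: "Sd a 0 = T a 0" using eq[of a 0] le gact_end_nz[of l, OF H(7)] by simp
    have e1: "Sd a 1 = T a 1" using eq[of a 1] le gact_end_nz1[of l, OF H(8)] by simp
    have c: "Sd a 1 = Sd a 0" by (rule diag_nahm_const[OF H(4) H(5) a]) simp
    have "skew (T a 0)" using H(10) le(1) unfolding nahm_sol_def by simp
    moreover have "diagonal (Sd a 0)" using H(5) le(1) by simp
    ultimately show ?thesis using e0 e1 c by simp
  qed
  then show ?thesis using H by blast
qed



lemma muR0_entry: "diagonal A \<Longrightarrow> diagonal B \<Longrightarrow> muR (A,B,0,0) 0 $ i $ j =
   (if i = j then (\<i>/2) * (A$i$i * cnj (A$i$i) - cnj (B$i$i) * B$i$i) else 0)"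
  by (auto simp: muR_def csmul_def outer_def diag_mult_left diag_mult_right diag0)

lemma muR1_entry: "diagonal A \<Longrightarrow> diagonal B \<Longrightarrow> muR (A,B,0,0) 1 $ i $ j =
   (if i = j then (\<i>/2) * (B$i$i * cnj (B$i$i) - cnj (A$i$i) * A$i$i) else 0)"
  by (auto simp: muR_def csmul_def outer_def diag_mult_left diag_mult_right diag0)

lemma muC0_entry: "diagonal A \<Longrightarrow> diagonal B \<Longrightarrow> muC (A,B,0,0) 0 $ i $ j =
   (if i = j then A$i$i * B$i$i else 0)"
  by (auto simp: muC_def outer_def diag_mult_left diag0)

lemma muC1_entry: "diagonal A \<Longrightarrow> diagonal B \<Longrightarrow> muC (A,B,0,0) 1 $ i $ j =
   (if i = j then - (A$i$i * B$i$i) else 0)"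
  by (auto simp: muC_def diag_mult_left diag0 mult.commute)

lemmas muR1_entry' = muR1_entry[unfolded One_nat_def]
lemmas muC1_entry' = muC1_entry[unfolded One_nat_def]

lemma Re_aux: "Re (x * y / (\<i> * 2)) + Re (cnj x * cnj y / (\<i> * 2)) = 0"
proof -
  have "cnj x * cnj y = cnj (x * y)" by simp
  then show ?thesis by (simp add: Re_divide field_simps)
qed

lemma mu_facts:
  assumes A: "diagonal A" and B: "diagonal B" and a: "a \<in> {1,2,3::nat}"
  shows "diagonal (mu_hat (A,B,0,0) a 0)"
    "mu_hat (A,B,0,0) a 1 = - mu_hat (A,B,0,0) a 0"
    "Re (mu_hat (A,B,0,0) a 0 $ m $ m) = 0"
  using a
  by (auto simp: diagonal_def vec_eq_iff mu_hat_def csmul_def muR0_entry[OF A B] muR1_entry[OF A B]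
      muC0_entry[OF A B] muC1_entry[OF A B] muR1_entry'[OF A B] muC1_entry'[OF A B] algebra_simps Re_aux)



lemma diag_trace_zero:
  fixes D :: "'k::finite cmat"
  assumes d: "diagonal D" and r: "\<forall>m. Re (D $ m $ m) = 0" and t: "Re (trace (D ** D)) = 0"
  shows "D = 0"
proof -
  have "Re (trace (D ** D)) = (\<Sum>m\<in>UNIV. - ((Im (D $ m $ m))^2))"
    unfolding trace_def by (simp add: diag_mult_left[OF d] Re_sum r power2_eq_square)
  then have "(\<Sum>m\<in>UNIV. (Im (D $ m $ m))^2) = 0" using t by (simp add: sum_negf)
  then have "\<forall>m\<in>UNIV. (Im (D $ m $ m))^2 = 0"
    by (subst (asm) sum_nonneg_eq_0_iff) auto
  then have "\<forall>m. D $ m $ m = 0" using r by (simp add: complex_eq_iff)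
  then show ?thesis using d unfolding vec_eq_iff by (metis diag0 zero_index)
qed

lemma diag_skew: assumes "diagonal D" "\<forall>m. Re (D $ m $ m) = 0" shows "skew D"
  unfolding skew_def vec_eq_iff
proof (intro allI)
  fix i j
  show "adj D $ i $ j = (- D) $ i $ j"
  proof (cases "i = j")
    case True then show ?thesis using assms(2) by (simp add: complex_eq_iff)
  next
    case False then show ?thesis using assms(1) by (simp add: diag0)
  qed
qed

lemma skew_Re: "skew X \<Longrightarrow> Re (X$m$m) = 0"
  unfolding skew_def vec_eq_iff by (drule spec[of _ m], drule spec[of _ m]) (simp add: complex_eq_iff)

lemma diag_add: "diagonal A \<Longrightarrow> diagonal B \<Longrightarrow> diagonal (A + B)"
  unfolding diagonal_def by simp

lemma part1:
  fixes z :: "'k::finite Mpt \<times> 'k nahm"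
  assumes h: "in_hatM0 z"
  shows "sigma0_zero z \<longleftrightarrow> sigma_zero z"
proof -
  obtain x T where z: "z = (x, T)" by fastforce
  obtain A B where H: "x = (A, B, 0, 0)" "diagonal A" "diagonal B"
     "\<forall>a\<in>{1,2,3}. diagonal (T a 0) \<and> skew (T a 0) \<and> T a 1 = T a 0"
    using hatM0_T[OF h[unfolded z]] by blast
  have s0: "sigma z a 0 = mu_hat x a 0 + T a 0" for a by (simp add: z sigma_def nu_def)
  have s1: "sigma z a 1 = mu_hat x a 1 + - T a 1" for a by (simp add: z sigma_def nu_def)
  have P: "diagonal (sigma z a 0) \<and> (\<forall>m. Re (sigma z a 0 $ m $ m) = 0) \<and> sigma z a 1 = - sigma z a 0"
    if a: "a \<in> {1,2,3}" for a
  proof -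
    note mf = mu_facts[OF H(2) H(3) a]
    have Ta: "diagonal (T a 0)" "skew (T a 0)" "T a 1 = T a 0" using H(4) a by auto
    have "diagonal (sigma z a 0)" unfolding s0 H(1) by (rule diag_add[OF mf(1) Ta(1)])
    moreover have "\<forall>m. Re (sigma z a 0 $ m $ m) = 0"
      unfolding s0 H(1) using mf(3) skew_Re[OF Ta(2)] by simp
    moreover have "sigma z a 1 = - sigma z a 0"
      unfolding s0 s1 H(1) mf(2) Ta(3) by simp
    ultimately show ?thesis by blast
  qed
  show ?thesis
  proof
    assume S: "sigma0_zero z"
    have "sigma z a j = 0" if a: "a \<in> {1,2,3}" and j: "j \<in> {0,1}" for a j
    proof -
      have P': "diagonal (sigma z a 0)" "\<forall>m. Re (sigma z a 0 $ m $ m) = 0" "sigma z a 1 = - sigma z a 0"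
        using P[OF a] by auto
      have "Re (trace (sigma z a 0 ** sigma z a 0)) = 0"
        using S a P'(1) diag_skew[OF P'(1) P'(2)] unfolding sigma0_zero_def by blast
      then have "sigma z a 0 = 0" by (rule diag_trace_zero[OF P'(1) P'(2)])
      then show ?thesis using j P'(3) by auto
    qed
    then show "sigma_zero z" unfolding sigma_zero_def by blast
  next
    assume "sigma_zero z"
    then have "\<forall>a\<in>{1,2,3}. sigma z a 0 = 0" unfolding sigma_zero_def by blast
    then show "sigma0_zero z" unfolding sigma0_zero_def by (simp add: trace_def)
  qed
qed



lemma unitary_perm:
  fixes h :: "'k::finite cmat"
  assumes "unitary h"
  shows "\<exists>\<rho>. \<rho> permutes (UNIV::'k set) \<and> (\<forall>i. h $ i $ \<rho> i \<noteq> 0)"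
proof (rule ccontr)
  assume N: "\<not> ?thesis"
  have "det h = 0"
    unfolding det_def
  proof (rule sum.neutral, rule ballI)
    fix p assume "p \<in> {p. p permutes (UNIV::'k set)}"
    then obtain i where "h $ i $ p i = 0" using N by blast
    then have "prod (\<lambda>i. h$i$p i) UNIV = 0" by (metis UNIV_I finite prod_zero)
    then show "of_int (sign p) * prod (\<lambda>i. h$i$p i) UNIV = 0" by simp
  qed
  moreover have "det h * det (adj h) = 1"
    using assms unfolding unitary_def by (metis det_mul det_I)
  ultimately show False by simp
qed

definition mon :: "('k \<Rightarrow> 'k) \<Rightarrow> ('k \<Rightarrow> complex) \<Rightarrow> 'k::finite cmat" where
  "mon \<rho> m = (\<chi> a b. if b = \<rho> a then m a else 0)"

lemma mon_entry: "mon \<rho> m $ a $ b = (if b = \<rho> a then m a else 0)"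
  by (simp add: mon_def)

lemma mon_mult_diag: "diagonal D \<Longrightarrow> mon \<rho> m ** D = mon \<rho> (\<lambda>a. m a * D $ \<rho> a $ \<rho> a)"
  by (simp add: vec_eq_iff diag_mult_right mon_entry)

lemma diag_mult_mon: "diagonal D \<Longrightarrow> D ** mon \<rho> m = mon \<rho> (\<lambda>a. D $ a $ a * m a)"
  by (simp add: vec_eq_iff diag_mult_left mon_entry)

lemma mon_mult_adj_mon:
  assumes "inj \<rho>"
  shows "mon \<rho> m ** adj (mon \<rho> n) = (\<chi> a c. if a = c then m a * cnj (n a) else 0)"
proof -
  have "(mon \<rho> m ** adj (mon \<rho> n)) $ a $ c = (if a = c then m a * cnj (n a) else 0)" for a c
  proof -
    have "(mon \<rho> m ** adj (mon \<rho> n)) $ a $ c =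
        (\<Sum>b\<in>UNIV. if b = \<rho> a then m a * cnj (if \<rho> a = \<rho> c then n c else 0) else 0)"
      unfolding mm_entry by (intro sum.cong) (auto simp: mon_entry)
    also have "\<dots> = m a * cnj (if \<rho> a = \<rho> c then n c else 0)" by simp
    also have "\<dots> = (if a = c then m a * cnj (n a) else 0)"
      using assms by (auto dest: injD)
    finally show ?thesis .
  qed
  then show ?thesis by (simp add: vec_eq_iff)
qed

lemma adj_mon_mult_mon:
  assumes p: "\<rho> permutes (UNIV::'k::finite set)"
  shows "adj (mon \<rho> m) ** mon \<rho> n = (\<chi> b d. if b = d then cnj (m (inv \<rho> b)) * n (inv \<rho> b) else 0)"
proof -
  have "(adj (mon \<rho> m) ** mon \<rho> n) $ b $ d = (if b = d then cnj (m (inv \<rho> b)) * n (inv \<rho> b) else 0)" for b d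
  proof -
    have "(adj (mon \<rho> m) ** mon \<rho> n) $ b $ d =
        (\<Sum>a\<in>UNIV. if a = inv \<rho> b then cnj (m a) * (if d = \<rho> a then n a else 0) else 0)"
      unfolding mm_entry
      by (intro sum.cong) (auto simp: mon_entry permutes_inverses[OF p])
    also have "\<dots> = cnj (m (inv \<rho> b)) * (if d = \<rho> (inv \<rho> b) then n (inv \<rho> b) else 0)" by simp
    also have "\<dots> = (if b = d then cnj (m (inv \<rho> b)) * n (inv \<rho> b) else 0)"
      by (simp add: permutes_inverses[OF p] eq_commute)
    finally show ?thesis .
  qed
  then show ?thesis by (simp add: vec_eq_iff)
qed

lemma mon_unitary:
  assumes p: "\<rho> permutes (UNIV::'k::finite set)" and u: "\<And>a. m a * cnj (m a) = 1"
  shows "unitary (mon \<rho> m)"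
proof -
  have "cnj (m a) * m a = 1" for a using u[of a] by (simp add: mult.commute)
  then show ?thesis
    unfolding unitary_def
    by (simp add: mon_mult_adj_mon[OF permutes_inj[OF p]] adj_mon_mult_mon[OF p] u mat_def cong: if_cong)
qed



lemma exp_sol:
  fixes f :: "real \<Rightarrow> complex"
  assumes cf: "continuous_on {0..1} f"
  shows "\<exists>E Ei. E 1 = 1 \<and> Ei 1 = 1 \<and> (\<forall>s. E s * Ei s = 1) \<and>
     (\<forall>s\<in>{0..1}. (E has_vector_derivative f s * E s) (at s within {0..1}) \<and>
                  (Ei has_vector_derivative - f s * Ei s) (at s within {0..1}))"
proof -
  define F where "F u = integral {0..u} f" for u
  have dF: "(F has_vector_derivative f s) (at s within {0..1})" if "s \<in> {0..1}" for s
    unfolding F_def using integral_has_vector_derivative[OF cf that] .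
  define E where "E = (\<lambda>s. exp (F s - F 1))"
  define Ei where "Ei = (\<lambda>s. exp (- (F s - F 1)))"
  have dexp: "(exp has_field_derivative exp z) (at z within S)" for z :: complex and S
    by (rule has_field_derivative_at_within[OF DERIV_exp])
  have "(E has_vector_derivative f s * E s) (at s within {0..1}) \<and>
        (Ei has_vector_derivative - f s * Ei s) (at s within {0..1})" if s: "s \<in> {0..1}" for s
  proof
    have g: "((\<lambda>s. F s - F 1) has_vector_derivative f s) (at s within {0..1})"
      using has_vector_derivative_diff[OF dF[OF s] has_vector_derivative_const] by simp
    have "(((\<lambda>z. exp z) \<circ> (\<lambda>s. F s - F 1)) has_vector_derivative (f s * exp (F s - F 1))) (at s within {0..1})"
      by (rule field_vector_diff_chain_within[OF g dexp])
    then show "(E has_vector_derivative f s * E s) (at s within {0..1})"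
      by (simp add: E_def o_def)
    have g': "((\<lambda>s. - (F s - F 1)) has_vector_derivative - f s) (at s within {0..1})"
      using has_vector_derivative_minus[OF g] by simp
    have "(((\<lambda>z. exp z) \<circ> (\<lambda>s. - (F s - F 1))) has_vector_derivative (- f s * exp (- (F s - F 1)))) (at s within {0..1})"
      by (rule field_vector_diff_chain_within[OF g' dexp])
    then show "(Ei has_vector_derivative - f s * Ei s) (at s within {0..1})"
      by (simp add: Ei_def o_def)
  qed
  moreover have "E s * Ei s = 1" for s by (simp add: E_def Ei_def flip: exp_add)
  moreover have "E 1 = 1" "Ei 1 = 1" by (simp_all add: E_def Ei_def)
  ultimately show ?thesis by blast
qed

lemma ode_cmp:
  fixes f \<phi> Ei :: "real \<Rightarrow> complex"
  assumes p: "\<forall>s\<in>{0..1}. (\<phi> has_vector_derivative f s * \<phi> s) (at s within {0..1})"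
    and e: "\<forall>s\<in>{0..1}. (Ei has_vector_derivative - f s * Ei s) (at s within {0..1})"
  shows "\<phi> 1 * Ei 1 = \<phi> 0 * Ei 0"
proof -
  have "((\<lambda>s. \<phi> s * Ei s) has_vector_derivative 0) (at s within {0..1})" if s: "s \<in> {0..1}" for s
  proof -
    have "((\<lambda>s. \<phi> s * Ei s) has_vector_derivative (\<phi> s * (- f s * Ei s) + f s * \<phi> s * Ei s)) (at s within {0..1})"
      using p e s by (intro has_vector_derivative_mult) auto
    then show ?thesis by (simp add: algebra_simps)
  qed
  then obtain c where "\<And>s. s \<in> {0..1} \<Longrightarrow> \<phi> s * Ei s = c"
    using has_vector_derivative_zero_constant[of "{0..1::real}" "\<lambda>s. \<phi> s * Ei s"] by blast
  then show ?thesis by simp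
qed

lemma unit_mod:
  fixes f E :: "real \<Rightarrow> complex"
  assumes e: "\<forall>s\<in>{0..1}. (E has_vector_derivative f s * E s) (at s within {0..1})"
    and r: "\<forall>s\<in>{0..1}. Re (f s) = 0" and e1: "E 1 = 1"
    and s: "s \<in> {0..1}"
  shows "E s * cnj (E s) = 1"
proof -
  have "((\<lambda>s. E s * cnj (E s)) has_vector_derivative 0) (at s within {0..1})" if s: "s \<in> {0..1}" for s
  proof -
    have "((\<lambda>s. E s * cnj (E s)) has_vector_derivative (E s * cnj (f s * E s) + f s * E s * cnj (E s))) (at s within {0..1})"
      using e s by (intro has_vector_derivative_mult has_vector_derivative_cnj) auto
    moreover have "cnj (f s) = - f s" using r s by (simp add: complex_eq_iff)
    ultimately show ?thesis by (simp add: algebra_simps)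
  qed
  then obtain c where "\<And>s. s \<in> {0..1} \<Longrightarrow> E s * cnj (E s) = c"
    using has_vector_derivative_zero_constant[of "{0..1::real}" "\<lambda>s. E s * cnj (E s)"] by blast
  then show ?thesis using e1 s by (metis atLeastAtMost_iff complex_cnj_one mult_1 order_refl zero_le_one)
qed

lemma C1_fE:
  fixes f E :: "real \<Rightarrow> complex"
  assumes f: "C1_on01 f" and e: "\<forall>s\<in>{0..1}. (E has_vector_derivative f s * E s) (at s within {0..1})"
  shows "C1_on01 (\<lambda>s. f s * E s)"
proof -
  from f obtain f' where f': "\<forall>s\<in>{0..1}. (f has_vector_derivative f' s) (at s within {0..1})"
    "continuous_on {0..1} f'" unfolding C1_on01_def by blast
  have cf: "continuous_on {0..1} f" using f by (rule C1_cont)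
  have cE: "continuous_on {0..1} E" using e by (intro continuous_on_vector_derivative) auto
  have c: "continuous_on {0..1} (\<lambda>s. f s * (f s * E s) + f' s * E s)"
    by (intro continuous_on_add continuous_on_mult cf cE f'(2))
  have "\<forall>s\<in>{0..1}. ((\<lambda>s. f s * E s) has_vector_derivative (f s * (f s * E s) + f' s * E s)) (at s within {0..1})"
    using f'(1) e by (auto intro!: has_vector_derivative_mult)
  then show ?thesis unfolding C1_on01_def
    apply (intro exI[of _ "\<lambda>s. f s * (f s * E s) + f' s * E s"])
    using c by blast
qed

lemma C2_E:
  fixes f E :: "real \<Rightarrow> complex"
  assumes f: "C1_on01 f" and e: "\<forall>s\<in>{0..1}. (E has_vector_derivative f s * E s) (at s within {0..1})"
  shows "C2_on01 E"
  unfolding C2_on01_def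
  apply (intro exI[of _ "\<lambda>s. f s * E s"])
  using e C1_fE[OF f e] by blast

lemma C1_from_entries:
  fixes M :: "real \<Rightarrow> 'k::finite cmat"
  assumes "\<forall>i j. C1_on01 (\<lambda>s. M s $ i $ j)"
  shows "C1_on01 M"
proof -
  from assms obtain d where d: "\<forall>i j. (\<forall>s\<in>{0..1}. ((\<lambda>s. M s $ i $ j) has_vector_derivative d i j s) (at s within {0..1}))
      \<and> continuous_on {0..1} (d i j)"
    unfolding C1_on01_def by metis
  have "\<forall>s\<in>{0..1}. (M has_vector_derivative (\<chi> i j. d i j s)) (at s within {0..1})"
    using d by (simp add: mat_deriv_iff)
  moreover have "continuous_on {0..1} (\<lambda>s. \<chi> i j. d i j s)"
    using d by (intro continuous_on_vec_lambda) simp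
  ultimately show ?thesis unfolding C1_on01_def
    apply (intro exI[of _ "\<lambda>s. \<chi> i j. d i j s"])
    by blast
qed

lemma C2_from_entries:
  fixes M :: "real \<Rightarrow> 'k::finite cmat"
  assumes "\<forall>i j. C2_on01 (\<lambda>s. M s $ i $ j)"
  shows "C2_on01 M"
proof -
  from assms obtain d where d: "\<forall>i j. (\<forall>s\<in>{0..1}. ((\<lambda>s. M s $ i $ j) has_vector_derivative d i j s) (at s within {0..1}))
      \<and> C1_on01 (d i j)"
    unfolding C2_on01_def by metis
  have "\<forall>s\<in>{0..1}. (M has_vector_derivative (\<chi> i j. d i j s)) (at s within {0..1})"
    using d by (simp add: mat_deriv_iff)
  moreover have "C1_on01 (\<lambda>s. \<chi> i j. d i j s)"
    using d by (intro C1_from_entries) simp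
  ultimately show ?thesis unfolding C2_on01_def
    apply (intro exI[of _ "\<lambda>s. \<chi> i j. d i j s"])
    by blast
qed



lemma gact_comp_gauge:
  assumes "gauge p" "gauge q" "s \<in> {0..1}"
  shows "gact (\<lambda>s. p s ** q s) X i s = gact p (gact q X) i s"
  using gact_comp[OF assms(3) gauge_deriv[OF assms(1,3)] gauge_deriv[OF assms(2,3)]] assms(2,3)
  unfolding gauge_def by blast

lemma gact_inv:
  fixes l :: "real \<Rightarrow> 'k::finite cmat"
  assumes l: "gauge l" and s: "s \<in> {0..1}"
  shows "gact (\<lambda>s. adj (l s) ** l s) X i s = X i s"
proof -
  have u: "\<And>t. t \<in> {0..1} \<Longrightarrow> adj (l t) ** l t = mat 1" using l unfolding gauge_def unitary_def by blast
  have "((\<lambda>s. adj (l s) ** l s) has_vector_derivative 0) (at s within {0..1})"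
    by (rule has_vector_derivative_transform_within[of "\<lambda>s. mat 1" 0 s "{0..1}" 1])
       (use s u in auto)
  then have "vector_derivative (\<lambda>s. adj (l s) ** l s) (at s within {0..1}) = 0"
    by (rule vd01[OF s])
  then show ?thesis using u[OF s] by (simp add: gact_def)
qed

lemma C2_const: "C2_on01 (\<lambda>s. c)"
  unfolding C2_on01_def by (rule exI[of _ "\<lambda>s. 0"]) (auto intro: C1_const)

lemma Hgrp_unitary: "(a, b) \<in> Hgrp \<Longrightarrow> unitary a \<and> unitary b"
  by (simp add: Hgrp_def)

lemma H0gens_sub: "H0gens \<subseteq> H0grp"
  unfolding H0grp_def by blast



lemma relations:
  fixes Td Sd :: "'k::finite nahm" and G :: "real \<Rightarrow> 'k cmat"
  assumes nT: "nahm_sol Td" and dT: "\<forall>i\<le>3. \<forall>s\<in>{0..1}. diagonal (Td i s)"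
    and nS: "nahm_sol Sd" and dS: "\<forall>i\<le>3. \<forall>s\<in>{0..1}. diagonal (Sd i s)"
    and gG: "gauge G"
    and GE: "\<forall>i\<le>3. \<forall>s\<in>{0..1}. gact G Td i s = Sd i s"
    and dA: "diagonal A" and dB: "diagonal B" and dA': "diagonal A'" and dB': "diagonal B'"
    and hA: "A' = G 0 ** A ** adj (G 1)" and hB: "B' = G 1 ** B ** adj (G 0)"
  shows "\<exists>\<rho> E. \<rho> permutes (UNIV::'k set) \<and>
   (\<forall>a b. E a b 1 = 1 \<and> (\<forall>s\<in>{0..1}. (E a b has_vector_derivative (Td 0 s $ b $ b - Sd 0 s $ a $ a) * E a b s)
          (at s within {0..1}) \<and> E a b s * cnj (E a b s) = 1)) \<and>
   (\<forall>a. A' $ a $ a = E a (\<rho> a) 0 * A $ \<rho> a $ \<rho> a \<and> B' $ a $ a = cnj (E a (\<rho> a) 0) * B $ \<rho> a $ \<rho> a \<and>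
        (\<forall>i\<in>{1,2,3}. Td i 0 $ \<rho> a $ \<rho> a = Sd i 0 $ a $ a))"
proof -
  define f where "f a b s = Td 0 s $ b $ b - Sd 0 s $ a $ a" for a b s
  have T0: "C1_on01 (Td 0)" "\<forall>s\<in>{0..1}. skew (Td 0 s)" using nT unfolding nahm_sol_def by auto
  have S0: "C1_on01 (Sd 0)" "\<forall>s\<in>{0..1}. skew (Sd 0 s)" using nS unfolding nahm_sol_def by auto
  have C1f: "C1_on01 (f a b)" for a b
    unfolding f_def[abs_def] by (intro C1_diff C1_entry T0(1) S0(1))
  have Ref: "\<forall>s\<in>{0..1}. Re (f a b s) = 0" for a b
    using T0(2) S0(2) by (simp add: f_def skew_Re)
  have "\<forall>a b. \<exists>E Ei. E 1 = 1 \<and> Ei 1 = 1 \<and> (\<forall>s. E s * Ei s = 1) \<and>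
     (\<forall>s\<in>{0..1}. (E has_vector_derivative f a b s * E s) (at s within {0..1}) \<and>
                  (Ei has_vector_derivative - f a b s * Ei s) (at s within {0..1}))"
    using exp_sol[OF C1_cont[OF C1f]] by blast
  then obtain E Ei where EE: "\<And>a b. E a b 1 = 1 \<and> Ei a b 1 = 1 \<and> (\<forall>s. E a b s * Ei a b s = 1) \<and>
     (\<forall>s\<in>{0..1}. (E a b has_vector_derivative f a b s * E a b s) (at s within {0..1}) \<and>
                  (Ei a b has_vector_derivative - f a b s * Ei a b s) (at s within {0..1}))"
    by metis
  have unit: "E a b s * cnj (E a b s) = 1" if "s \<in> {0..1}" for a b s
    using unit_mod[of "E a b" "f a b" s] EE[of a b] Ref[of a b] that by blast
  have cE: "cnj (E a b s) = Ei a b s" if "s \<in> {0..1}" for a b s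
  proof -
    have "E a b s * cnj (E a b s) = E a b s * Ei a b s" using unit[OF that] EE[of a b] by simp
    moreover have "E a b s \<noteq> 0" using EE[of a b] by (metis mult_zero_left zero_neq_one)
    ultimately show ?thesis by simp
  qed
  define G' where "G' s = vector_derivative G (at s within {0..1})" for s
  have dG: "(G has_vector_derivative G' s) (at s within {0..1})" if "s \<in> {0..1}" for s
    unfolding G'_def by (rule gauge_deriv[OF gG that])
  have uG: "unitary (G s)" if "s \<in> {0..1}" for s using gG that unfolding gauge_def by blast
  have Gd: "G' s = G s ** Td 0 s - Sd 0 s ** G s" if s: "s \<in> {0..1}" for s
  proof -
    have "G s ** Td 0 s ** adj (G s) - G' s ** adj (G s) = Sd 0 s"
    proof -
      have "gact G Td 0 s = Sd 0 s" using GE s by blast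
      then show ?thesis by (simp add: gact_def G'_def)
    qed
    then have "(G s ** Td 0 s ** adj (G s) - G' s ** adj (G s)) ** G s = Sd 0 s ** G s" by simp
    then have "G s ** Td 0 s - G' s = Sd 0 s ** G s"
      by (simp add: mm_diff_r unit_cancel_r'[OF uG[OF s]])
    then show ?thesis by (simp add: algebra_simps)
  qed
  have Gode: "\<forall>s\<in>{0..1}. ((\<lambda>s. G s $ a $ b) has_vector_derivative f a b s * G s $ a $ b) (at s within {0..1})" for a b
  proof
    fix s :: real assume s: "s \<in> {0..1}"
    have "((\<lambda>s. G s $ a $ b) has_vector_derivative G' s $ a $ b) (at s within {0..1})"
      using dG[OF s] by (simp add: mat_deriv_iff)
    moreover have "G' s $ a $ b = f a b s * G s $ a $ b"
      using dT s dS by (simp add: Gd[OF s] diag_mult_left diag_mult_right f_def algebra_simps)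
    ultimately show "((\<lambda>s. G s $ a $ b) has_vector_derivative f a b s * G s $ a $ b) (at s within {0..1})"
      by simp
  qed
  have G1: "G 1 $ a $ b = G 0 $ a $ b * Ei a b 0" for a b
    using ode_cmp[OF Gode[of a b], of "Ei a b"] EE[of a b] by simp
  obtain \<rho> where \<rho>: "\<rho> permutes (UNIV::'k set)" "\<And>a. G 0 $ a $ \<rho> a \<noteq> 0"
    using unitary_perm[OF uG[of 0]] by auto
  have eA: "A' ** G 1 = G 0 ** A" using hA unit_cancel_r'[OF uG[of 1]] by simp
  have eB: "B' ** G 0 = G 1 ** B" using hB unit_cancel_r'[OF uG[of 0]] by simp
  have eT: "G 0 ** Td i 0 = Sd i 0 ** G 0" if i: "i \<in> {1,2,3}" for i
  proof -
    have "gact G Td i 0 = Sd i 0" using GE i by auto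
    moreover have "i \<noteq> 0" using i by auto
    ultimately have "G 0 ** Td i 0 ** adj (G 0) = Sd i 0" by (simp add: gact_def)
    then have "G 0 ** Td i 0 ** adj (G 0) ** G 0 = Sd i 0 ** G 0" by simp
    then show ?thesis by (simp add: unit_cancel_r'[OF uG[of 0]])
  qed
  have K: "A' $ a $ a = E a (\<rho> a) 0 * A $ \<rho> a $ \<rho> a \<and> B' $ a $ a = cnj (E a (\<rho> a) 0) * B $ \<rho> a $ \<rho> a \<and>
        (\<forall>i\<in>{1,2,3}. Td i 0 $ \<rho> a $ \<rho> a = Sd i 0 $ a $ a)" for a
  proof -
    let ?b = "\<rho> a"
    have nz: "G 0 $ a $ ?b \<noteq> 0" by (rule \<rho>(2))
    have EEi: "E a ?b 0 * Ei a ?b 0 = 1" using EE by blast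
    have c0: "cnj (E a ?b 0) = Ei a ?b 0" using cE by simp
    have 1: "A' $ a $ a * (G 0 $ a $ ?b * Ei a ?b 0) = G 0 $ a $ ?b * A $ ?b $ ?b"
      using arg_cong[OF eA, of "\<lambda>M. M $ a $ ?b"] by (simp add: diag_mult_left[OF dA'] diag_mult_right[OF dA] G1)
    then have "A' $ a $ a * Ei a ?b 0 = A $ ?b $ ?b" using nz by (simp add: algebra_simps)
    then have "E a ?b 0 * (A' $ a $ a * Ei a ?b 0) = E a ?b 0 * A $ ?b $ ?b" by simp
    moreover have "E a ?b 0 * (A' $ a $ a * Ei a ?b 0) = A' $ a $ a * (E a ?b 0 * Ei a ?b 0)"
      by (simp add: algebra_simps)
    ultimately have KA: "A' $ a $ a = E a ?b 0 * A $ ?b $ ?b" using EEi by simp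
    have "B' $ a $ a * G 0 $ a $ ?b = G 0 $ a $ ?b * Ei a ?b 0 * B $ ?b $ ?b"
      using arg_cong[OF eB, of "\<lambda>M. M $ a $ ?b"] by (simp add: diag_mult_left[OF dB'] diag_mult_right[OF dB] G1)
    then have KB: "B' $ a $ a = cnj (E a ?b 0) * B $ ?b $ ?b" using nz c0 by (simp add: algebra_simps)
    have KT: "Td i 0 $ ?b $ ?b = Sd i 0 $ a $ a" if i: "i \<in> {1,2,3}" for i
    proof -
      have d1: "diagonal (Td i 0)" "diagonal (Sd i 0)" using dT dS i by auto
      have "G 0 $ a $ ?b * Td i 0 $ ?b $ ?b = Sd i 0 $ a $ a * G 0 $ a $ ?b"
        using arg_cong[OF eT[OF i], of "\<lambda>M. M $ a $ ?b"] by (simp add: diag_mult_left[OF d1(2)] diag_mult_right[OF d1(1)])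
      then show ?thesis using nz by (simp add: algebra_simps)
    qed
    show ?thesis using KA KB KT by blast
  qed
  have "\<forall>a b. E a b 1 = 1 \<and> (\<forall>s\<in>{0..1}. (E a b has_vector_derivative (Td 0 s $ b $ b - Sd 0 s $ a $ a) * E a b s)
          (at s within {0..1}) \<and> E a b s * cnj (E a b s) = 1)"
    using EE unit unfolding f_def by blast
  then show ?thesis using \<rho>(1) K by blast
qed



lemma mon_id_diag: "diagonal (mon id m)"
  unfolding diagonal_def by (simp add: mon_entry)

lemma permmat_mon:
  assumes p: "\<rho> permutes (UNIV::'k::finite set)"
  shows "permmat (mon \<rho> (\<lambda>a. 1) :: 'k cmat)"
  unfolding permmat_def
proof (intro exI conjI)
  show "inv \<rho> permutes UNIV" by (rule permutes_inv[OF p])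
  show "mon \<rho> (\<lambda>a. 1) = (\<chi> i j. if i = inv \<rho> j then 1 else 0)"
    by (auto simp: vec_eq_iff mon_entry permutes_inverses[OF p])
qed

lemma vm0: "(0::complex^'k::finite) v* (M::'k cmat) = 0"
  by (simp add: vector_matrix_mult_def vec_eq_iff)
lemma mv0: "(M::'k::finite cmat) *v 0 = 0"
  by (simp add: matrix_vector_mult_def vec_eq_iff)

lemma mon_sandwich:
  assumes "inj \<rho>" "diagonal D"
  shows "mon \<rho> m ** D ** adj (mon \<rho> n) = (\<chi> a c. if a = c then m a * D $ \<rho> a $ \<rho> a * cnj (n a) else 0)"
  by (simp add: mon_mult_diag[OF assms(2)] mon_mult_adj_mon[OF assms(1)])



lemma construct:
  fixes Td Sd :: "'k::finite nahm"
  assumes nT: "nahm_sol Td" and dT: "\<forall>i\<le>3. \<forall>s\<in>{0..1}. diagonal (Td i s)"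
    and nS: "nahm_sol Sd" and dS: "\<forall>i\<le>3. \<forall>s\<in>{0..1}. diagonal (Sd i s)"
    and dA: "diagonal A" and dB: "diagonal B" and dA': "diagonal A'" and dB': "diagonal B'"
    and \<rho>: "\<rho> permutes (UNIV::'k set)"
    and EP: "\<forall>a b. E a b 1 = 1 \<and> (\<forall>s\<in>{0..1}. (E a b has_vector_derivative (Td 0 s $ b $ b - Sd 0 s $ a $ a) * E a b s)
          (at s within {0..1}) \<and> E a b s * cnj (E a b s) = 1)"
    and K: "\<forall>a. A' $ a $ a = E a (\<rho> a) 0 * A $ \<rho> a $ \<rho> a \<and> B' $ a $ a = cnj (E a (\<rho> a) 0) * B $ \<rho> a $ \<rho> a \<and>
        (\<forall>i\<in>{1,2,3}. Td i 0 $ \<rho> a $ \<rho> a = Sd i 0 $ a $ a)"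
  shows "\<exists>gt. gauge gt \<and> (gt 0, gt 1) \<in> H0gens \<and> (A', B', 0, 0) = Hact (gt 0, gt 1) (A, B, 0, 0) \<and>
     (\<forall>i\<le>3. \<forall>s\<in>{0..1}. gact gt Td i s = Sd i s)"
proof -
  have inj: "inj \<rho>" by (rule permutes_inj[OF \<rho>])
  define f where "f a b s = Td 0 s $ b $ b - Sd 0 s $ a $ a" for a b s
  have T0: "C1_on01 (Td 0)" using nT unfolding nahm_sol_def by auto
  have S0: "C1_on01 (Sd 0)" using nS unfolding nahm_sol_def by auto
  have C1f: "C1_on01 (f a b)" for a b
    unfolding f_def[abs_def] by (intro C1_diff C1_entry T0 S0)
  have Ed: "\<forall>s\<in>{0..1}. (E a b has_vector_derivative f a b s * E a b s) (at s within {0..1})" for a b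
    using EP unfolding f_def by blast
  have Eu: "s \<in> {0..1} \<Longrightarrow> E a b s * cnj (E a b s) = 1" for a b s using EP by blast
  have E1: "E a b 1 = 1" for a b using EP by blast
  define gt where "gt s = mon \<rho> (\<lambda>a. E a (\<rho> a) s)" for s
  define gt' where "gt' s = mon \<rho> (\<lambda>a. f a (\<rho> a) s * E a (\<rho> a) s)" for s
  have ent: "(\<lambda>s. gt s $ a $ b) = (if b = \<rho> a then E a b else (\<lambda>s. 0))" for a b
    by (auto simp: gt_def mon_entry)
  have ent': "gt' s $ a $ b = (if b = \<rho> a then f a b s * E a b s else 0)" for a b s
    by (auto simp: gt'_def mon_entry)
  have dgt: "(gt has_vector_derivative gt' s) (at s within {0..1})" if s: "s \<in> {0..1}" for s
    unfolding mat_deriv_iff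
  proof (intro allI)
    fix a b
    show "((\<lambda>s. gt s $ a $ b) has_vector_derivative gt' s $ a $ b) (at s within {0..1})"
      unfolding ent ent' using Ed s by auto
  qed
  have C2gt: "C2_on01 gt"
  proof (rule C2_from_entries, intro allI)
    fix a b
    show "C2_on01 (\<lambda>s. gt s $ a $ b)"
      unfolding ent using C2_E[OF C1f Ed] C2_const by auto
  qed
  have ugt: "unitary (gt s)" if "s \<in> {0..1}" for s
    unfolding gt_def by (rule mon_unitary[OF \<rho>]) (use Eu that in auto)
  have ggt: "gauge gt" unfolding gauge_def using C2gt ugt by blast
  have vgt: "vector_derivative gt (at s within {0..1}) = gt' s" if "s \<in> {0..1}" for s
    by (rule vd01[OF that dgt[OF that]])
  have GE: "gact gt Td i s = Sd i s" if i: "i \<le> 3" and s: "s \<in> {0..1}" for i s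
  proof (cases "i = 0")
    case True
    have dt: "diagonal (Td 0 s)" "diagonal (Sd 0 s)" using dT dS s by auto
    have "gt s ** Td 0 s ** adj (gt s) - gt' s ** adj (gt s) = Sd 0 s"
    proof -
      have e1: "gt s ** Td 0 s ** adj (gt s) = (\<chi> a c. if a = c then E a (\<rho> a) s * Td 0 s $ \<rho> a $ \<rho> a * cnj (E a (\<rho> a) s) else 0)"
        unfolding gt_def by (rule mon_sandwich[OF inj dt(1)])
      have e2: "gt' s ** adj (gt s) = (\<chi> a c. if a = c then f a (\<rho> a) s * E a (\<rho> a) s * cnj (E a (\<rho> a) s) else 0)"
        unfolding gt_def gt'_def by (rule mon_mult_adj_mon[OF inj])
      show ?thesis unfolding e1 e2
      proof (subst vec_eq_iff, intro allI, subst vec_eq_iff, intro allI)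
        fix a c
        show "((\<chi> a c. if a = c then E a (\<rho> a) s * Td 0 s $ \<rho> a $ \<rho> a * cnj (E a (\<rho> a) s) else 0) -
            (\<chi> a c. if a = c then f a (\<rho> a) s * E a (\<rho> a) s * cnj (E a (\<rho> a) s) else 0)) $ a $ c = Sd 0 s $ a $ c"
        proof (cases "a = c")
          case True
          have u: "E a (\<rho> a) s * cnj (E a (\<rho> a) s) = 1" using Eu s by blast
          have "E a (\<rho> a) s * Td 0 s $ \<rho> a $ \<rho> a * cnj (E a (\<rho> a) s) -
                f a (\<rho> a) s * E a (\<rho> a) s * cnj (E a (\<rho> a) s)
              = (Td 0 s $ \<rho> a $ \<rho> a - f a (\<rho> a) s) * (E a (\<rho> a) s * cnj (E a (\<rho> a) s))"
            by (simp add: algebra_simps)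
          then show ?thesis using True u by (simp add: f_def)
        next
          case False then show ?thesis using dt(2) by (simp add: diag0)
        qed
      qed
    qed
    then show ?thesis using True by (simp add: gact_def vgt[OF s])
  next
    case False
    then have i3: "i \<in> {1,2,3}" using i by auto
    have cT: "Td i s = Td i 0" by (rule diag_nahm_const[OF nT dT i3 s])
    have cS: "Sd i s = Sd i 0" by (rule diag_nahm_const[OF nS dS i3 s])
    have dt: "diagonal (Td i 0)" "diagonal (Sd i 0)" using dT dS i by auto
    have "gt s ** Td i 0 ** adj (gt s) = Sd i 0"
      unfolding gt_def mon_sandwich[OF inj dt(1)]
    proof (subst vec_eq_iff, intro allI, subst vec_eq_iff, intro allI)
      fix a c
      show "(\<chi> a c. if a = c then E a (\<rho> a) s * Td i 0 $ \<rho> a $ \<rho> a * cnj (E a (\<rho> a) s) else 0) $ a $ c = Sd i 0 $ a $ c"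
      proof (cases "a = c")
        case True
        have u: "E a (\<rho> a) s * cnj (E a (\<rho> a) s) = 1" using Eu s by blast
        have "E a (\<rho> a) s * Td i 0 $ \<rho> a $ \<rho> a * cnj (E a (\<rho> a) s) = Td i 0 $ \<rho> a $ \<rho> a * (E a (\<rho> a) s * cnj (E a (\<rho> a) s))"
          by (simp add: algebra_simps)
        moreover have "Td i 0 $ \<rho> a $ \<rho> a = Sd i 0 $ a $ a" using K i3 by blast
        ultimately show ?thesis using True u by simp
      next
        case False then show ?thesis using dt(2) by (simp add: diag0)
      qed
    qed
    then show ?thesis using False cT cS by (simp add: gact_def)
  qed
  define m0 where "m0 a = E a (\<rho> a) 0" for a
  define P where "P = (mon \<rho> (\<lambda>a. 1) :: 'k cmat)"
  have g1: "gt 1 = P" unfolding gt_def P_def using E1 by simp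
  have g0: "gt 0 = mon id m0 ** P"
    unfolding gt_def P_def m0_def by (simp add: diag_mult_mon[OF mon_id_diag] mon_entry)
  have um0: "unitary (mon id m0)"
    by (rule mon_unitary[OF permutes_id]) (simp add: m0_def Eu)
  have H0: "(gt 0, gt 1) \<in> H0gens"
    unfolding H0gens_def g0 g1 P_def using mon_id_diag um0 permmat_mon[OF \<rho>] by blast
  have HA: "gt 0 ** A ** adj (gt 1) = A'"
  proof -
    have "gt 0 ** A ** adj (gt 1) = (\<chi> a c. if a = c then m0 a * A $ \<rho> a $ \<rho> a * cnj 1 else 0)"
      unfolding gt_def m0_def E1 by (rule mon_sandwich[OF inj dA])
    also have "\<dots> = A'"
      using K dA' by (auto simp: vec_eq_iff m0_def diag0)
    finally show ?thesis .
  qed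
  have HB: "gt 1 ** B ** adj (gt 0) = B'"
  proof -
    have "gt 1 ** B ** adj (gt 0) = (\<chi> a c. if a = c then 1 * B $ \<rho> a $ \<rho> a * cnj (m0 a) else 0)"
      unfolding gt_def m0_def E1 by (rule mon_sandwich[OF inj dB])
    also have "\<dots> = B'"
      using K dB' by (auto simp: vec_eq_iff m0_def diag0 mult.commute)
    finally show ?thesis .
  qed
  have "(A', B', 0, 0) = Hact (gt 0, gt 1) (A, B, 0, 0)"
    using HA HB by (simp add: vm0 mv0)
  then show ?thesis using ggt H0 GE by blast
qed



lemma part2:
  fixes z w :: "'k::finite Mpt \<times> 'k nahm"
  assumes hz: "in_hatM0 z" and hw: "in_hatM0 w" and r: "rel_by Hgrp z w"
  shows "rel_by H0grp z w"
proof -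
  obtain x T where z: "z = (x, T)" by fastforce
  obtain y S where w: "w = (y, S)" by fastforce
  obtain g where g: "gauge g" "(g 0, g 1) \<in> Hgrp" "y = Hact (g 0, g 1) x" "nahm_eq S (gact g T)"
    using r unfolding z w rel_by_def by auto
  obtain A B Td l where X: "x = (A, B, 0, 0)" "diagonal A" "diagonal B" "nahm_sol Td"
     "\<forall>i\<le>3. \<forall>s\<in>{0..1}. diagonal (Td i s)" "gauge l" "l 0 = mat 1" "l 1 = mat 1"
     "nahm_eq Td (gact l T)"
    using hatM0_data[OF hz[unfolded z]] by blast
  obtain A' B' Sd k where Y: "y = (A', B', 0, 0)" "diagonal A'" "diagonal B'" "nahm_sol Sd"
     "\<forall>i\<le>3. \<forall>s\<in>{0..1}. diagonal (Sd i s)" "gauge k" "k 0 = mat 1" "k 1 = mat 1"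
     "nahm_eq Sd (gact k S)"
    using hatM0_data[OF hw[unfolded w]] by blast
  have eT: "\<And>i s. i \<le> 3 \<Longrightarrow> s \<in> {0..1} \<Longrightarrow> Td i s = gact l T i s" using X(9) unfolding nahm_eq_def by blast
  have eS: "\<And>i s. i \<le> 3 \<Longrightarrow> s \<in> {0..1} \<Longrightarrow> Sd i s = gact k S i s" using Y(9) unfolding nahm_eq_def by blast
  have eg: "\<And>i s. i \<le> 3 \<Longrightarrow> s \<in> {0..1} \<Longrightarrow> S i s = gact g T i s" using g(4) unfolding nahm_eq_def by blast
  have gal: "gauge (\<lambda>s. adj (l s))" by (rule gauge_adj[OF X(6)])
  have gak: "gauge (\<lambda>s. adj (k s))" by (rule gauge_adj[OF Y(6)])
  have gkg: "gauge (\<lambda>s. k s ** g s)" by (rule gauge_mm[OF Y(6) g(1)])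
  define G where "G = (\<lambda>s. k s ** g s ** adj (l s))"
  have gG: "gauge G" unfolding G_def by (rule gauge_mm[OF gkg gal])
  have GE: "\<forall>i\<le>3. \<forall>s\<in>{0..1}. gact G Td i s = Sd i s"
  proof (intro allI impI ballI)
    fix i :: nat and s :: real assume i: "i \<le> 3" and s: "s \<in> {0..1}"
    have "gact (\<lambda>s. adj (l s)) Td i s = gact (\<lambda>s. adj (l s)) (gact l T) i s"
      by (rule gact_cong[where X=Td and Y="gact l T"]) (rule eT[OF i s])
    also have "\<dots> = gact (\<lambda>s. adj (l s) ** l s) T i s"
      by (rule gact_comp_gauge[OF gal X(6) s, symmetric])
    also have "\<dots> = T i s" by (rule gact_inv[OF X(6) s])
    finally have 1: "gact (\<lambda>s. adj (l s)) Td i s = T i s" .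
    have "gact G Td i s = gact (\<lambda>s. k s ** g s) (gact (\<lambda>s. adj (l s)) Td) i s"
      unfolding G_def by (rule gact_comp_gauge[OF gkg gal s])
    also have "\<dots> = gact (\<lambda>s. k s ** g s) T i s" by (rule gact_cong[where X="gact (\<lambda>s. adj (l s)) Td" and Y=T, OF 1])
    also have "\<dots> = gact k (gact g T) i s" by (rule gact_comp_gauge[OF Y(6) g(1) s])
    also have "\<dots> = gact k S i s" by (rule gact_cong[where X="gact g T" and Y=S]) (rule eg[OF i s, symmetric])
    also have "\<dots> = Sd i s" by (rule eS[OF i s, symmetric])
    finally show "gact G Td i s = Sd i s" .
  qed
  have G0: "G 0 = g 0" unfolding G_def using X(7) Y(7) by simp
  have G1: "G 1 = g 1" unfolding G_def using X(8) Y(8) by simp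
  have hA: "A' = G 0 ** A ** adj (G 1)" and hB: "B' = G 1 ** B ** adj (G 0)"
    using g(3) unfolding X(1) Y(1) G0 G1 by simp_all
  obtain \<rho> E where R: "\<rho> permutes (UNIV::'k set)"
   "\<forall>a b. E a b 1 = 1 \<and> (\<forall>s\<in>{0..1}. (E a b has_vector_derivative (Td 0 s $ b $ b - Sd 0 s $ a $ a) * E a b s)
          (at s within {0..1}) \<and> E a b s * cnj (E a b s) = 1)"
   "\<forall>a. A' $ a $ a = E a (\<rho> a) 0 * A $ \<rho> a $ \<rho> a \<and> B' $ a $ a = cnj (E a (\<rho> a) 0) * B $ \<rho> a $ \<rho> a \<and>
        (\<forall>i\<in>{1,2,3}. Td i 0 $ \<rho> a $ \<rho> a = Sd i 0 $ a $ a)"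
    using relations[OF X(4) X(5) Y(4) Y(5) gG GE X(2) X(3) Y(2) Y(3) hA hB] by blast
  obtain gt where gt: "gauge gt" "(gt 0, gt 1) \<in> H0gens" "(A', B', 0, 0) = Hact (gt 0, gt 1) (A, B, 0, 0)"
     "\<forall>i\<le>3. \<forall>s\<in>{0..1}. gact gt Td i s = Sd i s"
    using construct[OF X(4) X(5) Y(4) Y(5) X(2) X(3) Y(2) Y(3) R] by blast
  define F where "F = (\<lambda>s. adj (k s) ** gt s ** l s)"
  have gakg: "gauge (\<lambda>s. adj (k s) ** gt s)" by (rule gauge_mm[OF gak gt(1)])
  have gF: "gauge F" unfolding F_def by (rule gauge_mm[OF gakg X(6)])
  have F0: "F 0 = gt 0" unfolding F_def using X(7) Y(7) by simp
  have F1: "F 1 = gt 1" unfolding F_def using X(8) Y(8) by simp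
  have FE: "nahm_eq S (gact F T)"
    unfolding nahm_eq_def
  proof (intro allI impI ballI)
    fix i :: nat and s :: real assume i: "i \<le> 3" and s: "s \<in> {0..1}"
    have "gact F T i s = gact (\<lambda>s. adj (k s) ** gt s) (gact l T) i s"
      unfolding F_def by (rule gact_comp_gauge[OF gakg X(6) s])
    also have "\<dots> = gact (\<lambda>s. adj (k s) ** gt s) Td i s" by (rule gact_cong[where X="gact l T" and Y=Td]) (rule eT[OF i s, symmetric])
    also have "\<dots> = gact (\<lambda>s. adj (k s)) (gact gt Td) i s" by (rule gact_comp_gauge[OF gak gt(1) s])
    also have "\<dots> = gact (\<lambda>s. adj (k s)) Sd i s" by (rule gact_cong[where X="gact gt Td" and Y=Sd]) (use gt(4) i s in blast)
    also have "\<dots> = gact (\<lambda>s. adj (k s)) (gact k S) i s" by (rule gact_cong[where X=Sd and Y="gact k S"]) (rule eS[OF i s])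
    also have "\<dots> = gact (\<lambda>s. adj (k s) ** k s) S i s" by (rule gact_comp_gauge[OF gak Y(6) s, symmetric])
    also have "\<dots> = S i s" by (rule gact_inv[OF Y(6) s])
    finally show "S i s = gact F T i s" by simp
  qed
  have "(F 0, F 1) \<in> H0grp" using gt(2) H0gens_sub unfolding F0 F1 by blast
  moreover have "y = Hact (F 0, F 1) x" using gt(3) unfolding F0 F1 X(1) Y(1) by simp
  ultimately show ?thesis unfolding z w rel_by_def using gF FE by auto
qed


theorem lemma5p2:
  fixes ktype :: "'k::finite itself"
  shows "(\<forall>z :: 'k Mpt \<times> 'k nahm. in_hatM0 z \<longrightarrow> (sigma0_zero z \<longleftrightarrow> sigma_zero z)) \<and>
         (\<forall>z w :: 'k Mpt \<times> 'k nahm.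
            in_hatM0 z \<and> sigma0_zero z \<and> in_hatM0 w \<and> sigma0_zero w \<and> rel_by Hgrp z w
            \<longrightarrow> rel_by H0grp z w)"
  using part1 part2 by blast

end
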